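(* Let $\mathcal{P}$ be a partition of $\{1,\dots,n\}$ and $\mathcal{U}$ a subspace of $\mathbb{R}^n$. If $\mathcal{U}$ is $\mathcal{P}$-realizable then every element of $\mathcal{U}$ is $\mathcal{P}$-balanced. If $\mathcal{U}=\operatorname{span}\{u\}$ is one-dimensional, then $\mathcal{U}$ is $\mathcal{P}$-realizable if and only if $u$ is $\mathcal{P}$-balanced.
   Context: For $u\in\mathbb{R}^n$ and $\mathcal{I}\subseteq\{1,\dots,n\}$, $u_{\mathcal{I}}$ is the subvector of $u$ indexed by $\mathcal{I}$. $u$ is $\mathcal{P}$-balanced if $\|u_{\mathcal{I}}\|_2\le\sum_{\mathcal{J}\in\mathcal{P}\setminus\{\mathcal{I}\}}\|u_{\mathcal{J}}\|_2$ for all $\mathcal{I}\in\mathcal{P}$. $\mathcal{E}_{\mathcal{P}}=\{Y\succeq0: Y_{\mathcal{I}}=I\text{ for all }\mathcal{I}\in\mathcal{P}\}$; $\mathcal{U}$ is $\mathcal{P}$-realizable if some $Y\in\mathcal{E}_{\mathcal{P}}$ has nullspace containing $\mathcal{U}$. *)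

theory Defs
  imports "HOL-Analysis.Analysis" "HOL-Library.Disjoint_Sets"
begin

text \<open>Vectors in R^n are real^'n for a finite index type 'n; a partition of {1..n}
is a partition (partition_on) of UNIV :: 'n set.\<close>

definition sub_norm :: "real^'n \<Rightarrow> 'n set \<Rightarrow> real" where
  "sub_norm u I = sqrt (\<Sum>i\<in>I. (u $ i)^2)"

definition P_balanced :: "'n::finite set set \<Rightarrow> real^'n \<Rightarrow> bool" where
  "P_balanced P u \<longleftrightarrow> (\<forall>I\<in>P. sub_norm u I \<le> (\<Sum>J\<in>P - {I}. sub_norm u J))"

definition psd :: "real^'n^'n \<Rightarrow> bool" where
  "psd Y \<longleftrightarrow> transpose Y = Y \<and> (\<forall>x. 0 \<le> x \<bullet> (Y *v x))"

definition E_P :: "'n::finite set set \<Rightarrow> (real^'n^'n) set" where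
  "E_P P = {Y. psd Y \<and> (\<forall>I\<in>P. \<forall>i\<in>I. \<forall>j\<in>I. Y $ i $ j = (if i = j then 1 else 0))}"

definition P_realizable :: "'n::finite set set \<Rightarrow> (real^'n) set \<Rightarrow> bool" where
  "P_realizable P U \<longleftrightarrow> (\<exists>Y\<in>E_P P. U \<subseteq> {x. Y *v x = 0})"

end

theory Submission
  imports "HOL-Analysis.Analysis" "HOL-Library.Disjoint_Sets" Defs
begin


lemma greedy_signs:
  fixes a :: "'a \<Rightarrow> real"
  assumes "finite F" "\<forall>j\<in>F. 0 \<le> a j \<and> a j \<le> M" "0 \<le> M"
  shows "\<exists>s. (\<forall>j. s j = 1 \<or> s j = -1) \<and> \<bar>\<Sum>j\<in>F. s j * a j\<bar> \<le> M"
  using assms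
proof (induction F rule: finite_induct)
  case empty
  then show ?case by (intro exI[of _ "\<lambda>_. 1"]) auto
next
  case (insert x F)
  then obtain s where s: "\<forall>j. s j = 1 \<or> s j = -1" "\<bar>\<Sum>j\<in>F. s j * a j\<bar> \<le> M" by auto
  define \<sigma> where "\<sigma> = (\<Sum>j\<in>F. s j * a j)"
  define s' where "s' = s(x := (if \<sigma> \<ge> 0 then -1 else 1))"
  have eq: "(\<Sum>j\<in>F. s' j * a j) = \<sigma>" unfolding \<sigma>_def s'_def
    using insert(2) by (intro sum.cong) auto
  have "(\<Sum>j\<in>insert x F. s' j * a j) = s' x * a x + \<sigma>"
    using insert(1,2) eq by simp
  moreover have "\<bar>s' x * a x + \<sigma>\<bar> \<le> M"
    using s(2) insert(4,5) unfolding \<sigma>_def[symmetric] s'_def by auto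
  moreover have "\<forall>j. s' j = 1 \<or> s' j = -1" using s(1) unfolding s'_def by auto
  ultimately show ?case by metis
qed

lemma polygon:
  fixes a :: "'a \<Rightarrow> real"
  assumes fin: "finite P" and ne: "P \<noteq> {}" and nn: "\<forall>J\<in>P. 0 \<le> a J"
    and bal: "\<forall>I\<in>P. a I \<le> (\<Sum>J\<in>P - {I}. a J)"
  shows "\<exists>w. (\<forall>J\<in>P. cmod (w J) = 1) \<and> (\<Sum>J\<in>P. a J *\<^sub>R w J) = 0"
proof -
  have "Max (a ` P) \<in> a ` P" using fin ne by simp
  then obtain I where I1: "I \<in> P" and "a I = Max (a ` P)" by auto
  then have I2: "\<forall>J\<in>P. a J \<le> a I" using fin by simp
  define F where "F = P - {I}"
  have finF: "finite F" using fin unfolding F_def by simp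
  obtain s where s: "\<forall>j. s j = 1 \<or> s j = -1" "\<bar>\<Sum>j\<in>F. s j * a j\<bar> \<le> a I"
    using greedy_signs[OF finF, of a "a I"] nn I1 I2 unfolding F_def by auto
  define r where "r = (\<Sum>j\<in>F. s j * a j)"
  define S where "S = (\<Sum>j\<in>F. a j)"
  have aS: "a I \<le> S" using bal I1 unfolding S_def F_def by auto
  have rI: "\<bar>r\<bar> \<le> a I" using s(2) unfolding r_def .
  have aI0: "0 \<le> a I" using nn I1 by auto
  define t where "t = (a I ^ 2 - r ^ 2) / (S ^ 2 - r ^ 2)"
  have r2: "r^2 \<le> a I ^ 2" using rI aI0 by (metis abs_le_square_iff abs_of_nonneg)
  have S2: "a I ^ 2 \<le> S ^ 2" using aS aI0 by (simp add: power_mono)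
  have t0: "0 \<le> t" unfolding t_def using r2 S2 by (intro divide_nonneg_nonneg) auto
  have t1: "t \<le> 1" unfolding t_def using r2 S2
    by (cases "S^2 - r^2 = 0") (auto simp: divide_le_eq_1)
  define q where "q = sqrt t"
  define p where "p = sqrt (1 - t)"
  have q2: "q^2 = t" unfolding q_def using t0 by simp
  have p2: "p^2 = 1 - t" unfolding p_def using t1 by simp
  have key: "r^2 * p^2 + S^2 * q^2 = a I ^ 2"
  proof (cases "S^2 - r^2 = 0")
    case True
    then have "t = 0" unfolding t_def by simp
    then show ?thesis using p2 q2 True r2 S2 by simp
  next
    case False
    have "(S^2 - r^2) * t = a I ^ 2 - r^2" unfolding t_def using False by simp
    then show ?thesis unfolding p2 q2 by (simp add: algebra_simps)
  qed
  define z where "z = (\<Sum>j\<in>F. a j *\<^sub>R Complex (s j * p) q)"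
  have z: "z = Complex (r * p) (S * q)" unfolding z_def r_def S_def
    by (rule complex_eqI) (simp_all add: Re_sum Im_sum sum_distrib_right sum_distrib_left mult_ac)
  have cz: "cmod z = a I"
    unfolding z cmod_def using key aI0 by (simp add: power_mult_distrib)
  define w where "w = (\<lambda>J. if J = I then (if a I = 0 then 1 else - z / complex_of_real (a I))
                          else Complex (s J * p) q)"
  have "\<forall>J\<in>P. cmod (w J) = 1"
  proof
    fix J assume "J \<in> P"
    show "cmod (w J) = 1"
    proof (cases "J = I")
      case True
      then show ?thesis unfolding w_def using cz aI0 by (auto simp: norm_divide)
    next
      case False
      have "(s J * p)^2 + q^2 = 1" using s(1) p2 q2 by (metis add_diff_cancel_left' diff_add_cancel mult_1 mult_minus1 power2_minus power_mult_distrib one_power2)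
      then show ?thesis using False unfolding w_def cmod_def by simp
    qed
  qed
  moreover have "(\<Sum>J\<in>P. a J *\<^sub>R w J) = 0"
  proof -
    have Pins: "P = insert I F" "I \<notin> F" using I1 unfolding F_def by auto
    have "(\<Sum>J\<in>P. a J *\<^sub>R w J) = a I *\<^sub>R w I + (\<Sum>J\<in>F. a J *\<^sub>R w J)"
      using Pins finF by simp
    also have "(\<Sum>J\<in>F. a J *\<^sub>R w J) = z" unfolding z_def w_def F_def by (intro sum.cong) auto
    also have "a I *\<^sub>R w I = - z"
    proof (cases "a I = 0")
      case True
      then have "z = 0" using cz by simp
      then show ?thesis using True by simp
    next
      case False
      then show ?thesis unfolding w_def by (simp add: scaleR_conv_of_real)
    qed
    finally show ?thesis by simp
  qed
  ultimately show ?thesis by blast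
qed



lemma psd_sym:
  assumes "psd Y" shows "x \<bullet> (Y *v y) = y \<bullet> (Y *v (x::real^'n))"
proof -
  have "x \<bullet> (Y *v y) = (x v* Y) \<bullet> y" by (simp add: dot_lmul_matrix)
  also have "x v* Y = transpose Y *v x" by simp
  also have "transpose Y = Y" using assms unfolding psd_def by simp
  finally show ?thesis by (simp add: inner_commute)
qed

lemma psd_expand:
  fixes Y :: "real^'n^'n"
  assumes "psd Y"
  shows "(x + t *\<^sub>R y) \<bullet> (Y *v (x + t *\<^sub>R y)) = x \<bullet> (Y *v x) + 2 * t * (x \<bullet> (Y *v y)) + t^2 * (y \<bullet> (Y *v y))"
proof -
  have l: "Y *v (t *\<^sub>R y) = t *\<^sub>R (Y *v y)"
    using linear_scale[OF matrix_vector_mul_linear[of Y]] by (simp add: scaleR_conv_of_real)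
  show ?thesis
    using psd_sym[OF assms, of y x]
    by (simp add: matrix_vector_right_distrib l inner_add_left inner_add_right algebra_simps power2_eq_square)
qed

lemma psd_cs:
  fixes Y :: "real^'n^'n"
  assumes "psd Y"
  shows "(x \<bullet> (Y *v y))^2 \<le> (x \<bullet> (Y *v x)) * (y \<bullet> (Y *v y))"
proof -
  define a where "a = x \<bullet> (Y *v x)"
  define b where "b = x \<bullet> (Y *v y)"
  define c where "c = y \<bullet> (Y *v y)"
  have q: "\<And>t. 0 \<le> a + 2 * t * b + t^2 * c"
    using assms psd_expand[OF assms] unfolding psd_def a_def b_def c_def by metis
  have c0: "0 \<le> c" using assms unfolding psd_def c_def by simp
  show ?thesis
  proof (cases "c = 0")
    case True
    have "b = 0"
    proof (rule ccontr)
      assume "b \<noteq> 0"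
      have "0 \<le> a + 2 * (-(a+1)/(2*b)) * b" using q[of "-(a+1)/(2*b)"] True by simp
      then show False using \<open>b \<noteq> 0\<close> by (simp add: field_simps)
    qed
    then show ?thesis using True unfolding a_def b_def c_def by simp
  next
    case False
    then have cp: "c > 0" using c0 by simp
    have "0 \<le> a + 2 * (-b/c) * b + (-b/c)^2 * c" using q by blast
    then have "0 \<le> a - b^2 / c" using cp by (simp add: field_simps power2_eq_square)
    then have "b^2 \<le> a * c" using cp by (simp add: field_simps)
    then show ?thesis unfolding a_def b_def c_def .
  qed
qed

lemma part_unique:
  assumes "partition_on (UNIV :: 'n set) P" "J \<in> P" "i \<in> J"
  shows "{K\<in>P. i \<in> K} = {J}"
  using assms partition_onD2[OF assms(1)] by (auto simp: disjoint_def)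

lemma part_cover:
  assumes "partition_on (UNIV :: 'n set) P"
  shows "\<exists>J\<in>P. i \<in> J"
  using partition_onD1[OF assms] by auto

definition blockv :: "real^'n \<Rightarrow> 'n set \<Rightarrow> real^'n" where
  "blockv u J = (\<chi> i. if i \<in> J then u $ i else 0)"

lemma sum_blockv:
  fixes u :: "real^'n::finite"
  assumes "partition_on (UNIV :: 'n set) P"
  shows "(\<Sum>J\<in>P. blockv u J) = u"
proof (rule vec_eq_iff[THEN iffD2], rule allI)
  fix i
  obtain J where J: "J \<in> P" "i \<in> J" using part_cover[OF assms] by blast
  have fin: "finite P" using finite_elements[OF _ assms] by simp
  have "(\<Sum>J\<in>P. blockv u J) $ i = (\<Sum>K\<in>P. if i \<in> K then u $ i else 0)"
    by (simp add: sum_component blockv_def)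
  also have "\<dots> = (\<Sum>K\<in>{K\<in>P. i \<in> K}. u $ i)"
    using fin by (rule sum.inter_filter[symmetric])
  also have "\<dots> = u $ i" using part_unique[OF assms J] by simp
  finally show "(\<Sum>J\<in>P. blockv u J) $ i = u $ i" .
qed

lemma blockv_quad:
  fixes Y :: "real^'n::finite^'n"
  assumes "\<forall>i\<in>J. \<forall>j\<in>J. Y $ i $ j = (if i = j then 1 else 0)"
  shows "blockv u J \<bullet> (Y *v blockv u J) = (sub_norm u J)^2"
proof -
  have inner: "\<And>i. i \<in> J \<Longrightarrow> (Y *v blockv u J) $ i = u $ i"
  proof -
    fix i assume i: "i \<in> J"
    have "(Y *v blockv u J) $ i = (\<Sum>j\<in>UNIV. Y $ i $ j * (if j \<in> J then u $ j else 0))"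
      by (simp add: matrix_vector_mult_def blockv_def)
    also have "\<dots> = (\<Sum>j\<in>UNIV. if j \<in> J then Y $ i $ j * u $ j else 0)"
      by (intro sum.cong) auto
    also have "\<dots> = (\<Sum>j\<in>J. Y $ i $ j * u $ j)" by (simp add: sum.If_cases)
    also have "\<dots> = (\<Sum>j\<in>J. if i = j then u $ j else 0)"
      using assms i by (intro sum.cong) auto
    also have "\<dots> = u $ i" using i by simp
    finally show "(Y *v blockv u J) $ i = u $ i" .
  qed
  have "blockv u J \<bullet> (Y *v blockv u J) = (\<Sum>i\<in>UNIV. (if i \<in> J then u $ i else 0) * (Y *v blockv u J) $ i)"
    by (simp add: inner_vec_def blockv_def)
  also have "\<dots> = (\<Sum>i\<in>UNIV. if i \<in> J then (u $ i)^2 else 0)"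
    using inner by (intro sum.cong) (auto simp: power2_eq_square)
  also have "\<dots> = (\<Sum>i\<in>J. (u $ i)^2)" by (simp add: sum.If_cases)
  also have "\<dots> = (sub_norm u J)^2" unfolding sub_norm_def by (simp add: sum_nonneg)
  finally show ?thesis .
qed

lemma balanced_of_null:
  fixes Y :: "real^'n::finite^'n"
  assumes part: "partition_on (UNIV :: 'n set) P" and Y: "Y \<in> E_P P" and null: "Y *v u = 0"
  shows "P_balanced P u"
  unfolding P_balanced_def
proof
  fix I assume I: "I \<in> P"
  have psd: "psd Y" using Y unfolding E_P_def by simp
  have fin: "finite P" using finite_elements[OF _ part] by simp
  have quad: "\<And>J. J \<in> P \<Longrightarrow> blockv u J \<bullet> (Y *v blockv u J) = (sub_norm u J)^2"
    using Y unfolding E_P_def by (intro blockv_quad) auto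
  define x where "x = blockv u I"
  have "x \<bullet> (Y *v u) = 0" using null by simp
  also have "Y *v u = (\<Sum>J\<in>P. Y *v blockv u J)"
    using linear_sum[OF matrix_vector_mul_linear[of Y], of "blockv u" P] sum_blockv[OF part, of u]
    by simp
  finally have "(\<Sum>J\<in>P. x \<bullet> (Y *v blockv u J)) = 0" by (simp add: inner_sum_right)
  then have "x \<bullet> (Y *v x) + (\<Sum>J\<in>P-{I}. x \<bullet> (Y *v blockv u J)) = 0"
    using fin I by (simp add: sum.remove x_def)
  then have eq: "(sub_norm u I)^2 = - (\<Sum>J\<in>P-{I}. x \<bullet> (Y *v blockv u J))"
    using quad[OF I] unfolding x_def by simp
  have bnd: "\<bar>x \<bullet> (Y *v blockv u J)\<bar> \<le> sub_norm u I * sub_norm u J" if J: "J \<in> P" for J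
  proof -
    have "(x \<bullet> (Y *v blockv u J))^2 \<le> (sub_norm u I)^2 * (sub_norm u J)^2"
      using psd_cs[OF psd, of x "blockv u J"] quad[OF I] quad[OF J] unfolding x_def by simp
    also have "\<dots> = (sub_norm u I * sub_norm u J)^2" by (simp add: power_mult_distrib)
    finally have "\<bar>x \<bullet> (Y *v blockv u J)\<bar> \<le> \<bar>sub_norm u I * sub_norm u J\<bar>"
      by (simp only: abs_le_square_iff)
    moreover have "0 \<le> sub_norm u I * sub_norm u J" unfolding sub_norm_def by (simp add: sum_nonneg)
    ultimately show ?thesis by simp
  qed
  have "(sub_norm u I)^2 \<le> (\<Sum>J\<in>P-{I}. \<bar>x \<bullet> (Y *v blockv u J)\<bar>)"
    unfolding eq sum_negf[symmetric] by (rule sum_mono) simp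
  also have "\<dots> \<le> (\<Sum>J\<in>P-{I}. sub_norm u I * sub_norm u J)"
    using bnd by (intro sum_mono) auto
  also have "\<dots> = sub_norm u I * (\<Sum>J\<in>P-{I}. sub_norm u J)" by (simp add: sum_distrib_left)
  finally have h: "sub_norm u I * sub_norm u I \<le> sub_norm u I * (\<Sum>J\<in>P-{I}. sub_norm u J)"
    by (simp add: power2_eq_square)
  have n0: "0 \<le> sub_norm u K" for K unfolding sub_norm_def by (simp add: sum_nonneg)
  show "sub_norm u I \<le> (\<Sum>J\<in>P-{I}. sub_norm u J)"
  proof (cases "sub_norm u I = 0")
    case True then show ?thesis using n0 by (simp add: sum_nonneg)
  next
    case False then show ?thesis using h n0[of I] by (simp add: mult_le_cancel_left)
  qed
qed


definition blk :: "'n set set \<Rightarrow> 'n \<Rightarrow> 'n set" where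
  "blk P i = (THE J. J \<in> P \<and> i \<in> J)"

lemma blk_eq:
  assumes "partition_on (UNIV :: 'n set) P" "J \<in> P" "i \<in> J"
  shows "blk P i = J"
  unfolding blk_def
proof (rule the_equality)
  show "J \<in> P \<and> i \<in> J" using assms by simp
  fix K assume "K \<in> P \<and> i \<in> K"
  then show "K = J" using part_unique[OF assms] by auto
qed

lemma blk_in:
  assumes "partition_on (UNIV :: 'n set) P"
  shows "blk P i \<in> P \<and> i \<in> blk P i"
  using part_cover[OF assms, of i] blk_eq[OF assms] by auto

lemma blk_set:
  assumes "partition_on (UNIV :: 'n set) P" "J \<in> P"
  shows "{k. blk P k = J} = J"
  using blk_eq[OF assms] blk_in[OF assms(1)] by auto

lemma sum_group_blk:
  fixes f :: "'n::finite \<Rightarrow> 'b::comm_monoid_add"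
  assumes part: "partition_on (UNIV :: 'n set) P"
  shows "(\<Sum>j\<in>UNIV. f j) = (\<Sum>J\<in>P. \<Sum>j\<in>J. f j)"
proof -
  have fin: "finite P" using finite_elements[OF _ part] by simp
  have "(\<Sum>j\<in>UNIV. f j) = (\<Sum>J\<in>P. \<Sum>j\<in>{x \<in> UNIV. blk P x = J}. f j)"
    by (rule sum.group[OF finite fin, symmetric]) (use blk_in[OF part] in auto)
  also have "\<dots> = (\<Sum>J\<in>P. \<Sum>j\<in>J. f j)"
    using blk_set[OF part] by (intro sum.cong) auto
  finally show ?thesis .
qed

lemma sub_norm_sq: "(sub_norm u J)^2 = (\<Sum>i\<in>J. (u $ i)^2)"
  unfolding sub_norm_def by (simp add: sum_nonneg)

lemma realizable_of_balanced:
  fixes u :: "real^'n::finite"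
  assumes part: "partition_on (UNIV :: 'n set) P" and bal: "P_balanced P u"
  shows "\<exists>Y\<in>E_P P. Y *v u = 0"
proof -
  have fin: "finite P" using finite_elements[OF _ part] by simp
  have ne: "P \<noteq> {}" using blk_in[OF part] by auto
  define a where "a = sub_norm u"
  have a0: "\<forall>J\<in>P. 0 \<le> a J" unfolding a_def sub_norm_def by (simp add: sum_nonneg)
  obtain w where w1: "\<forall>J\<in>P. cmod (w J) = 1" and w0: "(\<Sum>J\<in>P. a J *\<^sub>R w J) = 0"
    using polygon[OF fin ne a0] bal unfolding P_balanced_def a_def by blast
  define c where "c = (\<lambda>i. u $ i / a (blk P i))"
  define h :: "'n \<Rightarrow> real^'n" where "h = (\<lambda>i. (\<chi> k. if blk P k = blk P i then (if i = k then 1 else 0) - c i * c k else 0))"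
  define g where "g = (\<lambda>i. (c i *\<^sub>R w (blk P i), h i))"
  define Y :: "real^'n^'n" where "Y = (\<chi> i j. g i \<bullet> g j)"
  have csum: "(\<Sum>j\<in>J. u $ j * c j) = a J" if J: "J \<in> P" for J
  proof -
    have "(\<Sum>j\<in>J. u $ j * c j) = (\<Sum>j\<in>J. (u $ j)^2 / a J)"
      unfolding c_def using blk_eq[OF part J] by (intro sum.cong) (auto simp: power2_eq_square)
    also have "\<dots> = (a J)^2 / a J" unfolding a_def sub_norm_sq by (simp add: sum_divide_distrib)
    also have "\<dots> = a J" by (simp add: power2_eq_square)
    finally show ?thesis .
  qed
  have c2sum: "(\<Sum>k\<in>J. (c k)^2) = 1" if J: "J \<in> P" "a J \<noteq> 0" for J
  proof -
    have "(\<Sum>k\<in>J. (c k)^2) = (\<Sum>k\<in>J. (u $ k)^2 / (a J)^2)"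
      unfolding c_def using blk_eq[OF part J(1)] by (intro sum.cong) (auto simp: power_divide)
    also have "\<dots> = (a J)^2 / (a J)^2" unfolding a_def sub_norm_sq by (rule sum_divide_distrib[symmetric])
    finally show ?thesis using J(2) by simp
  qed
  have c0: "c k = 0" if "a (blk P k) = 0" for k unfolding c_def using that by simp
  have psd: "psd Y"
    unfolding psd_def
  proof
    show "transpose Y = Y" unfolding Y_def transpose_def by (simp add: vec_eq_iff inner_commute)
    show "\<forall>x. 0 \<le> x \<bullet> (Y *v x)"
    proof
      fix x :: "real^'n"
      have "x \<bullet> (Y *v x) = (\<Sum>i\<in>UNIV. x $ i *\<^sub>R g i) \<bullet> (\<Sum>j\<in>UNIV. x $ j *\<^sub>R g j)"
        unfolding Y_def
        apply (simp add: inner_vec_def matrix_vector_mult_def inner_sum_left inner_sum_right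
            sum_distrib_left mult_ac)
        apply (subst sum.swap)
        apply (simp add: inner_commute mult_ac)
        done
      then show "0 \<le> x \<bullet> (Y *v x)" by simp
    qed
  qed
  have blocks: "\<forall>I\<in>P. \<forall>i\<in>I. \<forall>j\<in>I. Y $ i $ j = (if i = j then 1 else 0)"
  proof (intro ballI)
    fix I i j assume I: "I \<in> P" and i: "i \<in> I" and j: "j \<in> I"
    have bi: "blk P i = I" and bj: "blk P j = I" using blk_eq[OF part I] i j by auto
    have "h i \<bullet> h j = (\<Sum>k\<in>UNIV. if blk P k = I then ((if i = k then 1 else 0) - c i * c k) * ((if j = k then 1 else 0) - c j * c k) else 0)"
      unfolding h_def inner_vec_def using bi bj by (intro sum.cong) auto
    also have "\<dots> = (\<Sum>k\<in>I. ((if i = k then 1 else 0) - c i * c k) * ((if j = k then 1 else 0) - c j * c k))"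
      using blk_set[OF part I] by (simp add: sum.If_cases)
    also have "\<dots> = (\<Sum>k\<in>I. (if i = k then (if j = k then 1 else 0) else 0) - (if i = k then c j * c k else 0)
         - (if j = k then c i * c k else 0) + c i * c j * (c k)^2)"
      by (intro sum.cong) (auto simp: algebra_simps power2_eq_square)
    also have "\<dots> = (\<Sum>k\<in>I. (if i = k then (if j = k then 1 else 0) else 0)) - (\<Sum>k\<in>I. (if i = k then c j * c k else 0))
         - (\<Sum>k\<in>I. (if j = k then c i * c k else 0)) + c i * c j * (\<Sum>k\<in>I. (c k)^2)"
      by (simp add: sum_subtractf sum.distrib sum_distrib_left)
    also have "\<dots> = (if i = j then 1 else 0) - 2 * c i * c j + c i * c j * (\<Sum>k\<in>I. (c k)^2)"
      using i j by (simp add: mult_ac)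
    finally have hh: "h i \<bullet> h j = (if i = j then 1 else 0) - 2 * c i * c j + c i * c j * (\<Sum>k\<in>I. (c k)^2)" .
    have "Y $ i $ j = c i * c j * (cmod (w I))^2 + h i \<bullet> h j"
      unfolding Y_def g_def using bi bj by (simp add: inner_Pair power2_norm_eq_inner)
    also have "\<dots> = (if i = j then 1 else 0)"
    proof (cases "a I = 0")
      case True
      then show ?thesis unfolding hh using c0 bi bj by simp
    next
      case False
      then show ?thesis unfolding hh using w1 I c2sum[OF I False] by simp
    qed
    finally show "Y $ i $ j = (if i = j then 1 else 0)" .
  qed
  have G: "(\<Sum>j\<in>UNIV. u $ j *\<^sub>R g j) = 0"
  proof -
    have f: "(\<Sum>j\<in>UNIV. (u $ j * c j) *\<^sub>R w (blk P j)) = 0"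
    proof -
      have "(\<Sum>j\<in>UNIV. (u $ j * c j) *\<^sub>R w (blk P j)) = (\<Sum>J\<in>P. \<Sum>j\<in>J. (u $ j * c j) *\<^sub>R w (blk P j))"
        by (rule sum_group_blk[OF part])
      also have "\<dots> = (\<Sum>J\<in>P. \<Sum>j\<in>J. (u $ j * c j) *\<^sub>R w J)"
        using blk_eq[OF part] by (intro sum.cong) auto
      also have "\<dots> = (\<Sum>J\<in>P. a J *\<^sub>R w J)"
        using csum by (intro sum.cong) (auto simp: scaleR_sum_left[symmetric])
      finally show ?thesis using w0 by simp
    qed
    have s: "(\<Sum>j\<in>UNIV. u $ j *\<^sub>R h j) = 0"
    proof (rule vec_eq_iff[THEN iffD2], rule allI)
      fix k
      define K where "K = blk P k"
      have K: "K \<in> P" "k \<in> K" using blk_in[OF part] unfolding K_def by auto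
      have "(\<Sum>j\<in>UNIV. u $ j *\<^sub>R h j) $ k = (\<Sum>j\<in>UNIV. if blk P j = K then u $ j * ((if j = k then 1 else 0) - c j * c k) else 0)"
        unfolding h_def K_def by (simp add: sum_component) (intro sum.cong, auto)
      also have "\<dots> = (\<Sum>j\<in>K. u $ j * ((if j = k then 1 else 0) - c j * c k))"
        using blk_set[OF part K(1)] by (simp add: sum.If_cases)
      also have "\<dots> = (\<Sum>j\<in>K. (if j = k then u $ j else 0) - c k * (u $ j * c j))"
        by (intro sum.cong) (auto simp: algebra_simps)
      also have "\<dots> = (\<Sum>j\<in>K. (if j = k then u $ j else 0)) - c k * (\<Sum>j\<in>K. u $ j * c j)"
        by (simp add: sum_subtractf sum_distrib_left)
      also have "\<dots> = u $ k - c k * a K" using K csum[OF K(1)] by simp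
      also have "\<dots> = 0"
      proof (cases "a K = 0")
        case True
        have "(u $ k)^2 \<le> (\<Sum>j\<in>K. (u $ j)^2)" using K(2) by (intro member_le_sum) auto
        then have "u $ k = 0" using True unfolding a_def sub_norm_sq[symmetric] by simp
        then show ?thesis using True by simp
      next
        case False then show ?thesis unfolding c_def K_def by simp
      qed
      finally show "(\<Sum>j\<in>UNIV. u $ j *\<^sub>R h j) $ k = 0 $ k" by simp
    qed
    have "(\<Sum>j\<in>UNIV. u $ j *\<^sub>R g j) = ((\<Sum>j\<in>UNIV. (u $ j * c j) *\<^sub>R w (blk P j)), (\<Sum>j\<in>UNIV. u $ j *\<^sub>R h j))"
      unfolding g_def by (simp add: fst_sum snd_sum prod_eq_iff)
    then show ?thesis using f s by (simp add: zero_prod_def)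
  qed
  have "Y *v u = 0"
  proof (rule vec_eq_iff[THEN iffD2], rule allI)
    fix i
    have "(Y *v u) $ i = g i \<bullet> (\<Sum>j\<in>UNIV. u $ j *\<^sub>R g j)"
      unfolding Y_def by (simp add: matrix_vector_mult_def inner_sum_right mult_ac)
    then show "(Y *v u) $ i = 0 $ i" using G by simp
  qed
  moreover have "Y \<in> E_P P" unfolding E_P_def using psd blocks by simp
  ultimately show ?thesis by blast
qed

theorem corollary5p10:
  fixes P :: "'n::finite set set" and U :: "(real^'n) set"
  assumes "partition_on (UNIV :: 'n set) P"
    and "subspace U"
  shows "(P_realizable P U \<longrightarrow> (\<forall>u\<in>U. P_balanced P u))
     \<and> (\<forall>u. u \<noteq> 0 \<and> U = span {u} \<longrightarrow> (P_realizable P U \<longleftrightarrow> P_balanced P u))"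
proof -
  have p1: "P_realizable P V \<Longrightarrow> (\<forall>u\<in>V. P_balanced P u)" for V :: "(real^'n) set"
    unfolding P_realizable_def using balanced_of_null[OF assms(1)] by blast
  have p2: "P_realizable P U \<longleftrightarrow> P_balanced P u" if Uu: "U = span {u}" for u
  proof
    assume "P_realizable P U"
    then show "P_balanced P u" using p1 that by (simp add: span_base)
  next
    assume "P_balanced P u"
    then obtain Y where Y: "Y \<in> E_P P" "Y *v u = 0"
      using realizable_of_balanced[OF assms(1)] by blast
    have "U \<subseteq> {x. Y *v x = 0}"
    proof
      fix x assume "x \<in> U"
      then obtain t where "x = t *\<^sub>R u" using Uu by (auto simp: span_singleton)
      then have "Y *v x = t *\<^sub>R (Y *v u)"
        using linear_scale[OF matrix_vector_mul_linear[of Y]] by (simp add: scaleR_conv_of_real)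
      then show "x \<in> {x. Y *v x = 0}" using Y by simp
    qed
    then show "P_realizable P U" unfolding P_realizable_def using Y by blast
  qed
  show ?thesis using p1 p2 by blast
qed

end
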